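(* Let $r\geq 3$ be an integer and $c>0$ a real number. If $G$ is a graph of order $n$ with $$e(G)>\left(\frac{r-1}{2r}+c\right)n^{2},$$ then $$k_{r+1}(G)>2c\,\frac{r}{r+1}\left(\frac{n}{r}\right)^{r+1}\qquad\text{and}\qquad js^{(2,r+1,2)}(G)>2c\left(\frac{n}{r}\right)^{r-1}.$$
   Context: All graphs are finite and simple. $e(G)$ is the number of edges of $G$ and $k_s(G)$ is the number of $s$-cliques (complete subgraphs on $s$ vertices) of $G$. For an integer $r\geq 2$, $js^{(2,r+1,2)}(G)$ (the $(2,r+1,2)$-jointsize of $G$) is the maximum, over all edges $uv$ of $G$, of the number of $(r+1)$-cliques of $G$ containing both $u$ and $v$ (and $0$ if $G$ has no edges). *)

theory Defs
  imports Main Complex_Main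
begin

definition simple_graph :: "'a set \<Rightarrow> 'a set set \<Rightarrow> bool" where
  "simple_graph V E \<longleftrightarrow> finite V \<and> (\<forall>e\<in>E. e \<subseteq> V \<and> card e = 2)"

definition num_edges :: "'a set set \<Rightarrow> nat" where
  "num_edges E = card E"

definition cliques :: "'a set \<Rightarrow> 'a set set \<Rightarrow> nat \<Rightarrow> 'a set set" where
  "cliques V E s = {S. S \<subseteq> V \<and> card S = s \<and> (\<forall>u\<in>S. \<forall>v\<in>S. u \<noteq> v \<longrightarrow> {u, v} \<in> E)}"

definition num_cliques :: "'a set \<Rightarrow> 'a set set \<Rightarrow> nat \<Rightarrow> nat" where
  "num_cliques V E s = card (cliques V E s)"

definition jointsize :: "'a set \<Rightarrow> 'a set set \<Rightarrow> nat \<Rightarrow> nat" where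
  "jointsize V E r = (if E = {} then 0
     else Max ((\<lambda>e. card {S \<in> cliques V E (r + 1). e \<subseteq> S}) ` E))"

end

theory Submission
  imports Defs "HOL-Analysis.Convex"
begin

definition cn :: "'a set \<Rightarrow> 'a set set \<Rightarrow> 'a set \<Rightarrow> 'a set" where
  "cn V E T = {w\<in>V. \<forall>t\<in>T. {w,t} \<in> E}"

lemma card_filter_sum: "finite A \<Longrightarrow> card {x\<in>A. P x} = (\<Sum>x\<in>A. if P x then 1 else 0)"
  by (simp add: sum.inter_filter[symmetric])

lemma cl_finite: "simple_graph V E \<Longrightarrow> finite (cliques V E m)"
proof -
  assume "simple_graph V E"
  then have "finite V" by (simp add: simple_graph_def)
  then have "finite (Pow V)" by simp
  moreover have "cliques V E m \<subseteq> Pow V" by (auto simp: cliques_def)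
  ultimately show ?thesis using finite_subset by blast
qed

lemma cn_finite: "simple_graph V E \<Longrightarrow> finite (cn V E T)"
  by (simp add: simple_graph_def cn_def)

lemma no_loop: "simple_graph V E \<Longrightarrow> {w,w} \<notin> E"
  by (auto simp: simple_graph_def)

lemma bij_count:
  assumes G: "simple_graph V E"
  shows "(\<Sum>T\<in>cliques V E m. f T * card (cn V E T)) =
         (\<Sum>S\<in>cliques V E (Suc m). \<Sum>w\<in>S. (f (S - {w}) :: nat))"
proof -
  have fV: "finite V" using G by (simp add: simple_graph_def)
  have "(\<Sum>T\<in>cliques V E m. f T * card (cn V E T)) = (\<Sum>T\<in>cliques V E m. \<Sum>w\<in>cn V E T. f T)"
    by (simp add: mult.commute)
  also have "\<dots> = (\<Sum>(T,w)\<in>Sigma (cliques V E m) (cn V E). f T)"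
    by (rule sum.Sigma) (use cl_finite[OF G] cn_finite[OF G] in auto)
  also have "\<dots> = (\<Sum>(S,w)\<in>Sigma (cliques V E (Suc m)) (\<lambda>S. S). f (S - {w}))"
  proof (rule sum.reindex_bij_witness[where i = "\<lambda>(S,w). (S - {w}, w)" and j = "\<lambda>(T,w). (insert w T, w)"])
    fix a assume a: "a \<in> Sigma (cliques V E (Suc m)) (\<lambda>S. S)"
    obtain S w where aw: "a = (S,w)" by force
    with a have S: "S \<in> cliques V E (Suc m)" and w: "w \<in> S" by auto
    have fS: "finite S" using S fV by (auto simp: cliques_def intro: finite_subset)
    show "(\<lambda>(T,w). (insert w T, w)) ((\<lambda>(S,w). (S - {w}, w)) a) = a"
      using aw w by (auto simp: insert_absorb)
    have "S - {w} \<in> cliques V E m" using S w fS by (auto simp: cliques_def)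
    moreover have "w \<in> cn V E (S - {w})" using S w by (auto simp: cliques_def cn_def)
    ultimately show "(\<lambda>(S,w). (S - {w}, w)) a \<in> Sigma (cliques V E m) (cn V E)"
      using aw by auto
  next
    fix a assume a: "a \<in> Sigma (cliques V E m) (cn V E)"
    obtain T w where aw: "a = (T,w)" by force
    with a have T: "T \<in> cliques V E m" and w: "w \<in> cn V E T" by auto
    have fT: "finite T" using T fV by (auto simp: cliques_def intro: finite_subset)
    have wT: "w \<notin> T" using w no_loop[OF G] by (auto simp: cn_def)
    show "(\<lambda>(S,w). (S - {w}, w)) ((\<lambda>(T,w). (insert w T, w)) a) = a"
      using aw wT by auto
    have "insert w T \<in> cliques V E (Suc m)"
      using T w wT fT by (auto simp: cliques_def cn_def insert_commute)
    then show "(\<lambda>(T,w). (insert w T, w)) a \<in> Sigma (cliques V E (Suc m)) (\<lambda>S. S)"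
      using aw by auto
    show "(case (\<lambda>(T,w). (insert w T, w)) a of (S,w) \<Rightarrow> f (S - {w})) = (case a of (T,w) \<Rightarrow> f T)"
      using aw wT by simp
  qed
  also have "\<dots> = (\<Sum>S\<in>cliques V E (Suc m). \<Sum>w\<in>S. f (S - {w}))"
    by (rule sum.Sigma[symmetric]) (use cl_finite[OF G] fV in \<open>auto simp: cliques_def intro: finite_subset\<close>)
  finally show ?thesis .
qed

lemma local_bound:
  assumes G: "simple_graph V E" and S: "S \<in> cliques V E (Suc m)"
  shows "(\<Sum>w\<in>S. card (cn V E (S - {w}))) \<le> card V + m * card (cn V E S)"
proof -
  have fV: "finite V" using G by (simp add: simple_graph_def)
  have SV: "S \<subseteq> V" and cS: "card S = Suc m" using S by (auto simp: cliques_def)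
  have fS: "finite S" using SV fV finite_subset by blast
  have "(\<Sum>w\<in>S. card (cn V E (S - {w}))) = (\<Sum>w\<in>S. \<Sum>x\<in>V. if x \<in> cn V E (S - {w}) then 1 else 0)"
  proof (rule sum.cong[OF refl])
    fix w assume "w \<in> S"
    have "cn V E (S - {w}) = {x\<in>V. x \<in> cn V E (S - {w})}" by (auto simp: cn_def)
    then show "card (cn V E (S - {w})) = (\<Sum>x\<in>V. if x \<in> cn V E (S - {w}) then 1 else 0)"
      using card_filter_sum[OF fV] by metis
  qed
  also have "\<dots> = (\<Sum>x\<in>V. \<Sum>w\<in>S. if x \<in> cn V E (S - {w}) then 1 else 0)"
    by (rule sum.swap)
  also have "\<dots> = (\<Sum>x\<in>V. card {w\<in>S. x \<in> cn V E (S - {w})})"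
    using card_filter_sum[OF fS] by simp
  also have "\<dots> \<le> (\<Sum>x\<in>V. 1 + (if x \<in> cn V E S then m else 0))"
  proof (rule sum_mono)
    fix x assume xV: "x \<in> V"
    show "card {w\<in>S. x \<in> cn V E (S - {w})} \<le> 1 + (if x \<in> cn V E S then m else 0)"
    proof (cases "x \<in> cn V E S")
      case True
      have "card {w\<in>S. x \<in> cn V E (S - {w})} \<le> card S"
        by (rule card_mono[OF fS]) auto
      then show ?thesis using True cS by simp
    next
      case False
      have "card {w\<in>S. x \<in> cn V E (S - {w})} \<le> Suc 0"
      proof (subst card_le_Suc0_iff_eq)
        show "finite {w\<in>S. x \<in> cn V E (S - {w})}" using fS by simp
        show "\<forall>a1\<in>{w\<in>S. x \<in> cn V E (S - {w})}. \<forall>a2\<in>{w\<in>S. x \<in> cn V E (S - {w})}. a1 = a2"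
        proof (intro ballI, rule ccontr)
          fix a1 a2 assume a1: "a1 \<in> {w\<in>S. x \<in> cn V E (S - {w})}" and a2: "a2 \<in> {w\<in>S. x \<in> cn V E (S - {w})}"
            and ne: "a1 \<noteq> a2"
          have "x \<in> cn V E S"
          proof -
            have "\<forall>t\<in>S. {x,t} \<in> E"
            proof
              fix t assume t: "t \<in> S"
              show "{x,t} \<in> E"
              proof (cases "t = a1")
                case True
                then have "t \<in> S - {a2}" using t ne by auto
                then show ?thesis using a2 by (auto simp: cn_def)
              next
                case False
                then have "t \<in> S - {a1}" using t by auto
                then show ?thesis using a1 by (auto simp: cn_def)
              qed
            qed
            then show ?thesis using xV by (simp add: cn_def)
          qed
          then show False using False by simp
        qed
      qed
      then show ?thesis using False by simp
    qed
  qed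
  also have "\<dots> = card V + (\<Sum>x\<in>V. if x \<in> cn V E S then m else 0)"
    by (subst sum.distrib) simp
  also have "(\<Sum>x\<in>V. if x \<in> cn V E S then m else 0) = (\<Sum>x\<in>{x\<in>V. x \<in> cn V E S}. m)"
    using fV by (simp add: sum.inter_filter[symmetric])
  also have "{x\<in>V. x \<in> cn V E S} = cn V E S" by (auto simp: cn_def)
  finally show ?thesis by (simp add: mult.commute)
qed

lemma MM:
  assumes G: "simple_graph V E"
  shows "(real (Suc m) * num_cliques V E (Suc m))^2 \<le>
    num_cliques V E m * (card V * num_cliques V E (Suc m) + real m * (m+2) * num_cliques V E (Suc (Suc m)))"
proof -
  let ?N = "\<lambda>T. card (cn V E T)"
  have s1: "\<And>k. (\<Sum>T\<in>cliques V E k. ?N T) = Suc k * num_cliques V E (Suc k)"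
  proof -
    fix k
    have "(\<Sum>T\<in>cliques V E k. 1 * ?N T) = (\<Sum>S\<in>cliques V E (Suc k). \<Sum>w\<in>S. 1)"
      by (rule bij_count[OF G])
    also have "\<dots> = (\<Sum>S\<in>cliques V E (Suc k). Suc k)"
      by (rule sum.cong) (auto simp: cliques_def)
    finally show "(\<Sum>T\<in>cliques V E k. ?N T) = Suc k * num_cliques V E (Suc k)"
      by (simp add: num_cliques_def)
  qed
  have "(\<Sum>T\<in>cliques V E m. ?N T * ?N T) = (\<Sum>S\<in>cliques V E (Suc m). \<Sum>w\<in>S. ?N (S - {w}))"
    by (rule bij_count[OF G])
  also have "\<dots> \<le> (\<Sum>S\<in>cliques V E (Suc m). card V + m * ?N S)"
    by (rule sum_mono) (rule local_bound[OF G])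
  also have "\<dots> = card V * num_cliques V E (Suc m) + m * ((m+2) * num_cliques V E (Suc (Suc m)))"
    using s1[of "Suc m"] by (simp add: sum.distrib num_cliques_def sum_distrib_left[symmetric])
  finally have sq: "(\<Sum>T\<in>cliques V E m. ?N T * ?N T) \<le> card V * num_cliques V E (Suc m) + m * ((m+2) * num_cliques V E (Suc (Suc m)))" .
  have "(\<Sum>T\<in>cliques V E m. real (?N T))^2 \<le> (\<Sum>T\<in>cliques V E m. (real (?N T))^2) * card (cliques V E m)"
    by (rule sum_squared_le_sum_of_squares)
  moreover have "(\<Sum>T\<in>cliques V E m. real (?N T)) = real (Suc m) * num_cliques V E (Suc m)"
    using s1[of m] by (metis of_nat_mult of_nat_sum)
  moreover have "(\<Sum>T\<in>cliques V E m. (real (?N T))^2) \<le> card V * num_cliques V E (Suc m) + real m * (m+2) * num_cliques V E (Suc (Suc m))"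
  proof -
    have "(\<Sum>T\<in>cliques V E m. (real (?N T))^2) = real (\<Sum>T\<in>cliques V E m. ?N T * ?N T)"
      by (simp add: power2_eq_square)
    also have "\<dots> \<le> real (card V * num_cliques V E (Suc m) + m * ((m+2) * num_cliques V E (Suc (Suc m))))"
      using sq of_nat_le_iff by blast
    finally show ?thesis by (simp add: algebra_simps)
  qed
  ultimately have "(real (Suc m) * num_cliques V E (Suc m))^2 \<le> (card V * num_cliques V E (Suc m) + real m * (m+2) * num_cliques V E (Suc (Suc m))) * card (cliques V E m)"
    by (metis (no_types, lifting) mult_right_mono of_nat_0_le_iff order_trans)
  then show ?thesis by (simp add: num_cliques_def ac_simps)
qed

lemma K1: assumes G: "simple_graph V E" shows "num_cliques V E 1 = card V"
proof -
  have "cliques V E 1 = (\<lambda>v. {v}) ` V"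
    by (auto simp: cliques_def card_Suc_eq)
  moreover have "inj_on (\<lambda>v. {v}) V" by (auto simp: inj_on_def)
  ultimately show ?thesis by (simp add: num_cliques_def card_image)
qed

lemma K2: assumes G: "simple_graph V E" shows "num_cliques V E 2 = card E"
proof -
  have "cliques V E 2 = E"
  proof
    show "cliques V E 2 \<subseteq> E"
    proof
      fix S assume "S \<in> cliques V E 2"
      then have "card S = 2" "\<forall>u\<in>S. \<forall>v\<in>S. u \<noteq> v \<longrightarrow> {u, v} \<in> E" by (auto simp: cliques_def)
      then show "S \<in> E" by (auto simp: card_2_iff)
    qed
    show "E \<subseteq> cliques V E 2"
    proof
      fix S assume S: "S \<in> E"
      then have "S \<subseteq> V" "card S = 2" using G by (auto simp: simple_graph_def)
      moreover have "\<forall>u\<in>S. \<forall>v\<in>S. u \<noteq> v \<longrightarrow> {u, v} \<in> E"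
        using \<open>card S = 2\<close> S by (auto simp: card_2_iff insert_commute)
      ultimately show "S \<in> cliques V E 2" by (simp add: cliques_def)
    qed
  qed
  then show ?thesis by (simp add: num_cliques_def)
qed

lemma edge_bound: assumes G: "simple_graph V E" shows "2 * card E \<le> card V * (card V - 1)"
proof -
  have fV: "finite V" using G by (simp add: simple_graph_def)
  have "E \<subseteq> {B. B \<subseteq> V \<and> card B = 2}" using G by (auto simp: simple_graph_def)
  then have "card E \<le> card {B. B \<subseteq> V \<and> card B = 2}"
    by (rule card_mono[rotated]) (use fV in simp)
  also have "\<dots> = card V choose 2" by (rule n_subsets[OF fV])
  finally have "card E \<le> card V * (card V - 1) div 2" by (simp add: choose_two)
  moreover have "even (card V * (card V - 1))" by (cases "card V") auto
  ultimately show ?thesis by fastforce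
qed

lemma joint_count:
  assumes G: "simple_graph V E" and ne: "E \<noteq> {}"
  shows "num_cliques V E (Suc r) * (Suc r choose 2) \<le> card E * jointsize V E r"
proof -
  have fV: "finite V" using G by (simp add: simple_graph_def)
  have "E \<subseteq> Pow V" using G by (auto simp: simple_graph_def)
  then have fE: "finite E" using fV finite_subset by blast
  let ?Cl = "cliques V E (Suc r)"
  let ?f = "\<lambda>e. card {S \<in> ?Cl. e \<subseteq> S}"
  have fCl: "finite ?Cl" by (rule cl_finite[OF G])
  have "(\<Sum>e\<in>E. ?f e) = (\<Sum>e\<in>E. \<Sum>S\<in>?Cl. if e \<subseteq> S then 1 else 0)"
    using card_filter_sum[OF fCl] by simp
  also have "\<dots> = (\<Sum>S\<in>?Cl. \<Sum>e\<in>E. if e \<subseteq> S then 1 else 0)" by (rule sum.swap)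
  also have "\<dots> = (\<Sum>S\<in>?Cl. card {e\<in>E. e \<subseteq> S})"
    using card_filter_sum[OF fE] by simp
  also have "\<dots> = (\<Sum>S\<in>?Cl. Suc r choose 2)"
  proof (rule sum.cong[OF refl])
    fix S assume S: "S \<in> ?Cl"
    then have SV: "S \<subseteq> V" and cS: "card S = Suc r" and cl: "\<forall>u\<in>S. \<forall>v\<in>S. u \<noteq> v \<longrightarrow> {u, v} \<in> E"
      by (auto simp: cliques_def)
    have fS: "finite S" using SV fV finite_subset by blast
    have "{e\<in>E. e \<subseteq> S} = {B. B \<subseteq> S \<and> card B = 2}"
    proof
      show "{e\<in>E. e \<subseteq> S} \<subseteq> {B. B \<subseteq> S \<and> card B = 2}" using G by (auto simp: simple_graph_def)
      show "{B. B \<subseteq> S \<and> card B = 2} \<subseteq> {e\<in>E. e \<subseteq> S}"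
        using cl by (auto simp: card_2_iff)
    qed
    then show "card {e\<in>E. e \<subseteq> S} = Suc r choose 2" using n_subsets[OF fS] cS by simp
  qed
  also have "\<dots> = num_cliques V E (Suc r) * (Suc r choose 2)" by (simp add: num_cliques_def)
  finally have eq: "(\<Sum>e\<in>E. ?f e) = num_cliques V E (Suc r) * (Suc r choose 2)" .
  have "(\<Sum>e\<in>E. ?f e) \<le> (\<Sum>e\<in>E. Max (?f ` E))"
    by (rule sum_mono) (use fE in simp)
  then have "(\<Sum>e\<in>E. ?f e) \<le> card E * Max (?f ` E)" by simp
  then show ?thesis using eq ne by (simp add: jointsize_def)
qed

lemma binom_step: "r \<ge> 1 \<Longrightarrow> (r - s) * (r choose s) = (r choose Suc s) * Suc s"
  using binomial_absorb_comp[of r s] Suc_times_binomial_eq[of "r - 1" s] by simp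

lemma t1: fixes n :: real assumes sr: "s \<le> r" and rpos: "real r > 0"
  shows "n * ((real r - real s) / real r) * (C * (n / real r)^s)
          = real (r - s) * C * (n / real r)^(Suc s)"
proof -
  have e1: "n * ((real r - real s) / real r) = (real r - real s) * (n / real r)" by simp
  show ?thesis unfolding e1 power_Suc of_nat_diff[OF sr] by (simp only: ac_simps)
qed
lemma t2: assumes r3: "r \<ge> 3" shows "real (r - s) * real (r choose s) = real (r choose Suc s) * real (Suc s)"
proof -
  have "real ((r - s) * (r choose s)) = real ((r choose Suc s) * Suc s)" using binom_step[of r s] r3 by simp
  then show ?thesis by (simp only: of_nat_mult)
qed

lemma main_ineq:
  fixes V :: "'a set" and E :: "'a set set" and r :: nat and c :: real
  assumes G: "simple_graph V E"
    and r3: "r \<ge> 3"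
    and c0: "c > 0"
    and hyp: "real (num_edges E) > ((real r - 1) / (2 * real r) + c) * (real (card V))^2"
  shows "real (Suc r) * num_cliques V E (Suc r) > 2 * c * real r ^ 2 * (real (card V) / real r) ^ (r + 1)"
    and "card V > 0" and "E \<noteq> {}"
proof -
  define n where "n = real (card V)"
  define ee where "ee = real (card E)"
  define K where "K = (\<lambda>s. real (num_cliques V E s))"
  have rpos: "real r > 0" using r3 by simp
  have hyp': "ee > ((real r - 1) / (2 * real r) + c) * n^2"
    using hyp by (simp add: n_def ee_def num_edges_def)
  have eb: "2 * ee \<le> n * (n - 1)"
  proof -
    have "real (2 * card E) \<le> real (card V * (card V - 1))"
      using edge_bound[OF G] of_nat_le_iff by blast
    then show ?thesis by (cases "card V") (auto simp: n_def ee_def algebra_simps)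
  qed
  have coef: "(real r - 1) / (2 * real r) + c \<ge> 0" using r3 c0 by simp
  have n0: "n > 0"
  proof (rule ccontr)
    assume "\<not> n > 0"
    then have "n = 0" by (simp add: n_def)
    then show False using hyp' eb by simp
  qed
  then show "card V > 0" by (simp add: n_def)
  have "((real r - 1) / (2 * real r) + c) * n^2 \<ge> 0" using coef by simp
  then have ee0: "ee > 0" using hyp' by linarith
  then show "E \<noteq> {}" by (auto simp: ee_def)
  define b where "b = 1 - 2 * ee / n^2"
  have n2: "n^2 > 0" using n0 by simp
  have "2 * ee / n^2 > (real r - 1) / real r + 2 * c"
  proof -
    have "2 * ee > ((real r - 1) / real r + 2 * c) * n^2"
      using hyp' rpos by (simp add: field_simps)
    then show ?thesis using n2 by (simp add: field_simps)
  qed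
  then have bl: "b < 1 / real r - 2 * c" using rpos by (simp add: b_def field_simps)
  then have br: "b \<le> 1 / real r" using c0 by simp
  have key: "\<forall>s. 1 \<le> s \<longrightarrow> s \<le> r \<longrightarrow> K s \<ge> real (r choose s) * (n / real r)^s \<and>
     real (Suc s) * K (Suc s) \<ge> n * (1 - real s * b) * K s"
  proof (intro allI impI)
    fix s :: nat assume s1: "1 \<le> s"
    then show "s \<le> r \<Longrightarrow> K s \<ge> real (r choose s) * (n / real r)^s \<and>
     real (Suc s) * K (Suc s) \<ge> n * (1 - real s * b) * K s"
    proof (induction s rule: nat_induct_at_least)
      case base
      have "K 1 = n" using K1[OF G] by (simp add: K_def n_def)
      moreover have "K 2 = ee" using K2[OF G] by (simp add: K_def ee_def)
      moreover have "n * (1 - b) * n = 2 * ee" using n0 by (simp add: b_def field_simps power2_eq_square)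
      ultimately show ?case using rpos by (simp add: numeral_2_eq_2)
    next
      case (Suc s)
      then have sr: "s \<le> r" and s1: "1 \<le> s" by auto
      from Suc.IH[OF sr] have IH1: "K s \<ge> real (r choose s) * (n / real r)^s"
        and IH2: "real (Suc s) * K (Suc s) \<ge> n * (1 - real s * b) * K s" by auto
      have nr: "n / real r > 0" using n0 rpos by simp
      have Cpos: "real (r choose s) > 0" using sr by simp
      have "real (r choose s) * (n / real r)^s > 0" using Cpos nr by simp
      then have Ks: "K s > 0" using IH1 by linarith
      have fac: "1 - real s * b \<ge> (real r - real s) / real r"
      proof -
        have "real s * b \<le> real s * (1 / real r)" using br by (intro mult_left_mono) auto
        then show ?thesis using rpos by (simp add: field_simps)
      qed
      have fac0: "(real r - real s) / real r \<ge> 0" using sr rpos by simp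
      have A: "real (Suc s) * K (Suc s) \<ge> n * ((real r - real s) / real r) * (real (r choose s) * (n / real r)^s)"
      proof -
        have "n * ((real r - real s) / real r) * (real (r choose s) * (n / real r)^s)
            \<le> n * (1 - real s * b) * (real (r choose s) * (n / real r)^s)"
          using fac n0 Cpos nr by (intro mult_right_mono mult_left_mono) auto
        also have "\<dots> \<le> n * (1 - real s * b) * K s"
          using IH1 n0 fac fac0 by (intro mult_left_mono) auto
        finally show ?thesis using IH2 by linarith
      qed
      have bs: "real (r - s) * real (r choose s) = real (r choose Suc s) * real (Suc s)"
        using t2 r3 by blast
      have "n * ((real r - real s) / real r) * (real (r choose s) * (n / real r)^s)
          = real (r - s) * real (r choose s) * (n / real r)^(Suc s)"
        by (rule t1[OF sr rpos])
      also have "\<dots> = real (Suc s) * (real (r choose Suc s) * (n / real r)^(Suc s))"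
        using bs by simp
      finally have "real (Suc s) * (real (r choose Suc s) * (n / real r)^(Suc s)) \<le> real (Suc s) * K (Suc s)"
        using A by linarith
      then have B1: "K (Suc s) \<ge> real (r choose Suc s) * (n / real r)^(Suc s)"
        by (simp only: mult_le_cancel_left_pos[of "real (Suc s)"] of_nat_0_less_iff zero_less_Suc)
      have MMs: "(real (Suc s) * K (Suc s))^2 \<le> K s * (n * K (Suc s) + real s * (s+2) * K (Suc (Suc s)))"
        using MM[OF G, of s] by (simp add: K_def n_def add.commute)
      have f1: "1 - real s * b \<ge> 0" using fac fac0 by linarith
      have KS0: "K (Suc s) \<ge> 0" by (simp add: K_def)
      have "real (Suc s) * K (Suc s) * (n * (1 - real s * b) * K s) \<le> (real (Suc s) * K (Suc s))^2"
        using IH2 KS0 by (simp add: power2_eq_square mult_left_mono)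
      also have "\<dots> \<le> K s * (n * K (Suc s) + real s * (s+2) * K (Suc (Suc s)))" by (rule MMs)
      finally have "K s * (real (Suc s) * n * (1 - real s * b) * K (Suc s)) \<le> K s * (n * K (Suc s) + real s * (s+2) * K (Suc (Suc s)))"
        by (simp add: algebra_simps)
      then have C1: "real (Suc s) * n * (1 - real s * b) * K (Suc s) \<le> n * K (Suc s) + real s * (s+2) * K (Suc (Suc s))"
        using Ks by simp
      have "real s * (n * (1 - real (Suc s) * b) * K (Suc s)) = real (Suc s) * n * (1 - real s * b) * K (Suc s) - n * K (Suc s)"
        by (simp add: algebra_simps)
      also have "\<dots> \<le> real s * (real (Suc (Suc s)) * K (Suc (Suc s)))" using C1 by (simp add: algebra_simps)
      finally have "n * (1 - real (Suc s) * b) * K (Suc s) \<le> real (Suc (Suc s)) * K (Suc (Suc s))"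
        using s1 by (simp add: mult_le_cancel_left)
      then show ?case using B1 by simp
    qed
  qed
  from key[rule_format, of r] r3 have Kr: "K r \<ge> (n / real r)^r"
    and Kr1: "real (Suc r) * K (Suc r) \<ge> n * (1 - real r * b) * K r" by auto
  have rb: "1 - real r * b > 2 * real r * c"
  proof -
    have "real r * b < real r * (1 / real r - 2 * c)" using bl rpos by simp
    then show ?thesis using rpos by (simp add: algebra_simps)
  qed
  have nr: "(n / real r)^r > 0" using n0 rpos by simp
  have "2 * c * real r ^ 2 * (n / real r) ^ (r + 1) = n * (2 * real r * c) * (n / real r)^r"
    using rpos by (simp add: field_simps power2_eq_square)
  also have "\<dots> < n * (1 - real r * b) * (n / real r)^r"
    using rb n0 nr by simp
  also have "\<dots> \<le> n * (1 - real r * b) * K r"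
  proof (rule mult_left_mono[OF Kr])
    have "2 * real r * c \<ge> 0" using c0 rpos by simp
    then have "1 - real r * b \<ge> 0" using rb by linarith
    then show "0 \<le> n * (1 - real r * b)" using n0 by simp
  qed
  finally show "real (Suc r) * num_cliques V E (Suc r) > 2 * c * real r ^ 2 * (real (card V) / real r) ^ (r + 1)"
    using Kr1 by (simp add: K_def n_def)
qed


lemma choose2_real: "2 * real (Suc r choose 2) = real (Suc r) * real r"
proof -
  have "2 * (Suc r choose 2) = Suc r * r"
    by (simp add: choose_two)
  then have "real (2 * (Suc r choose 2)) = real (Suc r * r)" by simp
  then show ?thesis by (simp only: of_nat_mult)
qed

theorem lemma1:
  fixes V :: "'a set" and E :: "'a set set" and r :: nat and c :: real
  assumes "simple_graph V E"
    and "r \<ge> 3"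
    and "c > 0"
    and "real (num_edges E) > ((real r - 1) / (2 * real r) + c) * (real (card V))^2"
  shows "real (num_cliques V E (r + 1)) > 2 * c * (real r / (real r + 1)) * (real (card V) / real r) ^ (r + 1)
       \<and> real (jointsize V E r) > 2 * c * (real (card V) / real r) ^ (r - 1)"
proof -
  note mi = main_ineq[OF assms]
  define n where "n = real (card V)"
  define K where "K = real (num_cliques V E (Suc r))"
  define X where "X = (n / real r) ^ (r + 1)"
  have rpos: "real r > 0" using assms(2) by simp
  have n0: "n > 0" using mi(2) by (simp add: n_def)
  have X0: "X > 0" using n0 rpos by (simp add: X_def)
  have main: "real (Suc r) * K > 2 * c * real r ^ 2 * X" using mi(1) by (simp add: K_def X_def n_def)
  have "2 * c * real r * X \<le> 2 * c * real r ^ 2 * X"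
  proof -
    have "real r \<le> real r ^ 2" using assms(2) by (simp add: power2_eq_square)
    then show ?thesis using assms(3) X0 by (intro mult_right_mono mult_left_mono) auto
  qed
  then have m1: "real (Suc r) * K > 2 * c * real r * X" using main by linarith
  have P1: "K > 2 * c * (real r / (real r + 1)) * X"
  proof -
    have "2 * c * (real r / (real r + 1)) * X = (2 * c * real r * X) / real (Suc r)"
      by (simp add: field_simps)
    also have "\<dots> < K" using m1 by (simp add: pos_divide_less_eq mult.commute)
    finally show ?thesis .
  qed
  have jc: "num_cliques V E (Suc r) * (Suc r choose 2) \<le> card E * jointsize V E r"
    by (rule joint_count[OF assms(1) mi(3)])
  define J where "J = real (jointsize V E r)"
  define ee where "ee = real (card E)"
  have jc': "K * (real (Suc r) * real r) \<le> 2 * ee * J"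
  proof -
    have "real (num_cliques V E (Suc r) * (Suc r choose 2)) \<le> real (card E * jointsize V E r)"
      using jc of_nat_le_iff by blast
    then have "K * real (Suc r choose 2) \<le> ee * J" by (simp add: K_def ee_def J_def)
    then have "K * (2 * real (Suc r choose 2)) \<le> 2 * (ee * J)" by simp
    then show ?thesis unfolding choose2_real by (simp add: ac_simps)
  qed
  have eb: "2 * ee \<le> n * n"
  proof -
    have "real (2 * card E) \<le> real (card V * (card V - 1))"
      using edge_bound[OF assms(1)] of_nat_le_iff by blast
    also have "\<dots> \<le> real (card V * card V)" by (simp only: of_nat_le_iff) (intro mult_left_mono; simp)
    finally show ?thesis by (simp add: n_def ee_def)
  qed
  have J0: "J \<ge> 0" by (simp add: J_def)
  have "2 * ee * J \<le> n * n * J" using eb J0 by (rule mult_right_mono)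
  have "real r * (real (Suc r) * K) > real r * (2 * c * real r ^ 2 * X)"
    using main rpos by simp
  then have "n * n * J > real r * (2 * c * real r ^ 2 * X)"
    using jc' \<open>2 * ee * J \<le> n * n * J\<close> by (simp add: ac_simps)
  moreover have "real r * (2 * c * real r ^ 2 * X) = n * n * (real r * (2 * c * (n / real r) ^ (r - 1)))"
  proof -
    have "X = (n / real r) ^ (r - 1) * (n / real r) ^ 2"
      unfolding X_def power_add[symmetric] using assms(2) by simp
    then show ?thesis using rpos by (simp add: field_simps power2_eq_square)
  qed
  moreover have "real r * (2 * c * (n / real r) ^ (r - 1)) \<ge> 2 * c * (n / real r) ^ (r - 1)"
  proof -
    have "2 * c * (n / real r) ^ (r - 1) \<ge> 0" using assms(3) n0 rpos by simp
    moreover have "real r \<ge> 1" using assms(2) by simp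
    ultimately show ?thesis by (simp add: mult_le_cancel_right1)
  qed
  ultimately have "n * n * J > n * n * (2 * c * (n / real r) ^ (r - 1))"
    using n0 by (smt (verit) mult_left_mono zero_le_mult_iff)
  then have P2: "J > 2 * c * (n / real r) ^ (r - 1)"
    using n0 by (simp add: mult_less_cancel_left_pos)
  show ?thesis using P1 P2 by (simp add: K_def X_def J_def n_def)
qed

end
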